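(* Let $X$ be a finite topological space and $x\in X$. Then for every $y\in X$, $\Psi(y,x)\le |\{a\in X\mid \Psi(x,a)=0\}|$, i.e. the furtherness of any point $y$ from $x$ is at most the number of zeros in the row of $x$ of the furtherness matrix.
   Context: For a finite topological space $X$ and $x\in X$, $U_x$ denotes the minimal open set containing $x$. A nested sequence of open sets around $x$ is a finite sequence $U_0\subsetneq U_1\subsetneq\cdots\subsetneq U_m=X$ of open sets with $U_0=U_x$ such that for each $j$ there is no open set $V$ with $U_j\subsetneq V\subsetneq U_{j+1}$. The furtherness function $\Psi:X\times X\to\{0,1,\dots,|X|-1\}$ is defined by: $\Psi(x,y)$ is the smallest integer $k\ge 0$ such that there exists a nested sequence $(U_j)_{j\ge0}$ of open sets around $x$ with $y\in U_k$. The furtherness matrix of $X=\{a_1,\dots,a_n\}$ has $(i,j)$ entry $\Psi(a_i,a_j)$. *)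

theory Defs
  imports "HOL-Analysis.Analysis"
begin

definition minimal_open :: "'a topology \<Rightarrow> 'a \<Rightarrow> 'a set" where
  "minimal_open T x = \<Inter>{U. openin T U \<and> x \<in> U}"

definition nested_seq :: "'a topology \<Rightarrow> 'a \<Rightarrow> (nat \<Rightarrow> 'a set) \<Rightarrow> nat \<Rightarrow> bool" where
  "nested_seq T x U m \<longleftrightarrow>
     U 0 = minimal_open T x \<and>
     U m = topspace T \<and>
     (\<forall>j\<le>m. openin T (U j)) \<and>
     (\<forall>j<m. U j \<subset> U (Suc j)) \<and>
     (\<forall>j<m. \<not> (\<exists>V. openin T V \<and> U j \<subset> V \<and> V \<subset> U (Suc j)))"

definition furtherness :: "'a topology \<Rightarrow> 'a \<Rightarrow> 'a \<Rightarrow> nat" where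
  "furtherness T x y = (LEAST k. \<exists>U m. nested_seq T x U m \<and> k \<le> m \<and> y \<in> U k)"

end

theory Submission
  imports Defs
begin

definition sat_chain :: "'a topology \<Rightarrow> (nat \<Rightarrow> 'a set) \<Rightarrow> nat \<Rightarrow> bool" where
  "sat_chain T U m \<longleftrightarrow>
     (\<forall>j\<le>m. openin T (U j)) \<and>
     (\<forall>j<m. U j \<subset> U (Suc j)) \<and>
     (\<forall>j<m. \<not> (\<exists>V. openin T V \<and> U j \<subset> V \<and> V \<subset> U (Suc j)))"

lemma sat_chain_prepend:
  assumes "sat_chain T U m" "openin T A" "A \<subset> U 0"
    "\<not> (\<exists>V. openin T V \<and> A \<subset> V \<and> V \<subset> U 0)"
  shows "sat_chain T (\<lambda>j. case j of 0 \<Rightarrow> A | Suc i \<Rightarrow> U i) (Suc m)"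
  using assms unfolding sat_chain_def
  apply (intro conjI allI impI)
    apply (case_tac j; auto)
   apply (case_tac j; auto)
  apply (case_tac j; simp)
  done

lemma minimal_step:
  assumes fin: "finite (topspace T)" and "openin T A" "openin T W" "A \<subset> W"
  obtains V where "openin T V" "A \<subset> V" "V \<subseteq> W"
    "\<not> (\<exists>V'. openin T V' \<and> A \<subset> V' \<and> V' \<subset> V)"
proof -
  let ?S = "{V. openin T V \<and> A \<subset> V \<and> V \<subseteq> W}"
  have "?S \<subseteq> Pow (topspace T)"
  proof
    fix V assume "V \<in> ?S"
    then have "openin T V" by blast
    then show "V \<in> Pow (topspace T)" using openin_subset by blast
  qed
  hence "finite ?S" using fin by (meson finite_Pow_iff rev_finite_subset)
  moreover have "W \<in> ?S" using assms(3,4) by blast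
  ultimately obtain V where V: "V \<in> ?S" "\<forall>b\<in>?S. b \<le> V \<longrightarrow> V = b"
    using finite_has_minimal[of ?S] by blast
  have "\<not> (\<exists>V'. openin T V' \<and> A \<subset> V' \<and> V' \<subset> V)"
  proof
    assume "\<exists>V'. openin T V' \<and> A \<subset> V' \<and> V' \<subset> V"
    then obtain V' where "openin T V'" "A \<subset> V'" "V' \<subset> V" by blast
    moreover have "V \<subseteq> W" using V(1) by blast
    ultimately have "V' \<in> ?S" "V' \<le> V" "V \<noteq> V'" by auto
    then show False using V(2) by blast
  qed
  moreover have "openin T V" "A \<subset> V" "V \<subseteq> W" using V(1) by blast+
  ultimately show ?thesis using that by blast
qed

lemma chain_exists:
  assumes fin: "finite (topspace T)"
  shows "openin T A \<Longrightarrow> openin T W \<Longrightarrow> A \<subseteq> W \<Longrightarrow>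
    \<exists>U m. sat_chain T U m \<and> U 0 = A \<and> U m = W \<and> m \<le> card (W - A)"
proof (induction "card (W - A)" arbitrary: A rule: less_induct)
  case less
  show ?case
  proof (cases "A = W")
    case True
    then show ?thesis using less.prems
      by (intro exI[of _ "\<lambda>_. A"] exI[of _ 0]) (auto simp: sat_chain_def)
  next
    case False
    then have "A \<subset> W" using less.prems by auto
    then obtain V where V: "openin T V" "A \<subset> V" "V \<subseteq> W"
      "\<not> (\<exists>V'. openin T V' \<and> A \<subset> V' \<and> V' \<subset> V)"
      using minimal_step[OF fin less.prems(1,2)] by blast
    have fW: "finite W" using fin less.prems(2) by (meson openin_subset rev_finite_subset)
    have lt: "card (W - V) < card (W - A)"
      using V fW by (intro psubset_card_mono) auto
    obtain U m where U: "sat_chain T U m" "U 0 = V" "U m = W" "m \<le> card (W - V)"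
      using less.hyps[OF lt V(1) less.prems(2) V(3)] by blast
    define U' where "U' = (\<lambda>j. case j of 0 \<Rightarrow> A | Suc i \<Rightarrow> U i)"
    have sc: "sat_chain T U' (Suc m)"
      unfolding U'_def using sat_chain_prepend[OF U(1) less.prems(1)] U(2) V(2,4) by blast
    have "U' 0 = A" "U' (Suc m) = W" using U(3) by (simp_all add: U'_def)
    moreover have "Suc m \<le> card (W - A)" using U(4) lt by linarith
    ultimately show ?thesis using sc by blast
  qed
qed

lemma chain_through:
  assumes fin: "finite (topspace T)" "openin T A" "openin T W" "A \<subseteq> W"
  shows "\<exists>U m k. sat_chain T U m \<and> U 0 = A \<and> U m = topspace T
     \<and> k \<le> card (W - A) \<and> k \<le> m \<and> U k = W"
proof -
  obtain U1 m1 where U1: "sat_chain T U1 m1" "U1 0 = A" "U1 m1 = W" "m1 \<le> card (W - A)"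
    using chain_exists[OF fin(1) fin(2,3,4)] by blast
  obtain U2 m2 where U2: "sat_chain T U2 m2" "U2 0 = W" "U2 m2 = topspace T"
    using chain_exists[OF fin(1) fin(3)] openin_subset[OF fin(3)] by blast
  define U where "U j = (if j \<le> m1 then U1 j else U2 (j - m1))" for j
  have sc: "sat_chain T U (m1 + m2)"
    unfolding sat_chain_def
  proof (intro conjI allI impI)
    fix j assume "j \<le> m1 + m2"
    then show "openin T (U j)"
    proof (cases "j \<le> m1")
      case True
      then have "U j = U1 j" by (simp add: U_def)
      then show ?thesis using U1(1) True unfolding sat_chain_def by simp
    next
      case False
      then have "U j = U2 (j - m1)" by (simp add: U_def)
      moreover have "j - m1 \<le> m2" using \<open>j \<le> m1 + m2\<close> by simp
      ultimately show ?thesis using U2(1) unfolding sat_chain_def by simp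
    qed
  next
    fix j assume j: "j < m1 + m2"
    show "U j \<subset> U (Suc j)"
    proof (cases "j < m1")
      case True
      then have e1: "U j = U1 j" "U (Suc j) = U1 (Suc j)" by (simp_all add: U_def)
      show ?thesis unfolding e1 using U1(1) True unfolding sat_chain_def by blast
    next
      case False
      then have i: "Suc j - m1 = Suc (j - m1)" "j - m1 < m2" using j by auto
      have e1: "U j = U2 (j - m1)" using False U1 U2 by (cases "j = m1") (auto simp: U_def)
      have e2: "U (Suc j) = U2 (Suc (j - m1))" using False i by (auto simp: U_def)
      show ?thesis unfolding e1 e2 using U2(1) i unfolding sat_chain_def by blast
    qed
    show "\<not> (\<exists>V. openin T V \<and> U j \<subset> V \<and> V \<subset> U (Suc j))"
    proof (cases "j < m1")
      case True
      then have e1: "U j = U1 j" "U (Suc j) = U1 (Suc j)" by (simp_all add: U_def)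
      show ?thesis unfolding e1 using U1(1) True unfolding sat_chain_def by blast
    next
      case False
      then have i: "Suc j - m1 = Suc (j - m1)" "j - m1 < m2" using j by auto
      have e1: "U j = U2 (j - m1)" using False U1 U2 by (cases "j = m1") (auto simp: U_def)
      have e2: "U (Suc j) = U2 (Suc (j - m1))" using False i by (auto simp: U_def)
      show ?thesis unfolding e1 e2 using U2(1) i unfolding sat_chain_def by blast
    qed
  qed
  have t: "U (m1 + m2) = topspace T"
  proof (cases "m2 = 0")
    case True then show ?thesis using U1(3) U2(2,3) by (simp add: U_def)
  next
    case False then show ?thesis using U2(3) by (simp add: U_def)
  qed
  have a: "U 0 = A" using U1(2) by (simp add: U_def)
  have w: "U m1 = W" using U1(3) by (simp add: U_def)
  have "sat_chain T U (m1 + m2) \<and> U 0 = A \<and> U (m1 + m2) = topspace T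
     \<and> m1 \<le> card (W - A) \<and> m1 \<le> m1 + m2 \<and> U m1 = W"
    using sc t a w U1(4) by simp
  then show ?thesis by blast
qed

lemma minimal_open_props:
  assumes fin: "finite (topspace T)" and x: "x \<in> topspace T"
  shows "openin T (minimal_open T x)" "x \<in> minimal_open T x"
    "minimal_open T x \<subseteq> topspace T"
proof -
  let ?F = "{U. openin T U \<and> x \<in> U}"
  have "?F \<subseteq> Pow (topspace T)" by (auto dest: openin_subset)
  hence "finite ?F" using fin by (meson finite_Pow_iff rev_finite_subset)
  moreover have "topspace T \<in> ?F" using x by auto
  ultimately show "openin T (minimal_open T x)" unfolding minimal_open_def
    by (intro openin_Inter) auto
  show "x \<in> minimal_open T x" unfolding minimal_open_def by auto
  show "minimal_open T x \<subseteq> topspace T" using \<open>topspace T \<in> ?F\<close>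
    unfolding minimal_open_def by auto
qed

lemma further_le:
  assumes fin: "finite (topspace T)" and y: "y \<in> topspace T"
    and W: "openin T W" "minimal_open T y \<subseteq> W" "a \<in> W"
  shows "furtherness T y a \<le> card (W - minimal_open T y)"
proof -
  note mo = minimal_open_props[OF fin y]
  obtain U m k where U: "sat_chain T U m" "U 0 = minimal_open T y" "U m = topspace T"
     "k \<le> card (W - minimal_open T y)" "k \<le> m" "U k = W"
    using chain_through[OF fin mo(1) W(1,2)] by blast
  have "nested_seq T y U m" using U unfolding nested_seq_def sat_chain_def by auto
  hence "furtherness T y a \<le> k" unfolding furtherness_def
    using U W by (intro Least_le) auto
  then show ?thesis using U by linarith
qed

theorem mainTheorem16:
  fixes T :: "'a topology" and x y :: 'a
  assumes "finite (topspace T)"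
    and "x \<in> topspace T"
    and "y \<in> topspace T"
  shows "furtherness T y x \<le> card {a \<in> topspace T. furtherness T x a = 0}"
proof -
  note mx = minimal_open_props[OF assms(1,2)]
  note my = minimal_open_props[OF assms(1,3)]
  have sub: "minimal_open T x \<subseteq> {a \<in> topspace T. furtherness T x a = 0}"
  proof
    fix a assume a: "a \<in> minimal_open T x"
    have "furtherness T x a \<le> card (minimal_open T x - minimal_open T x)"
      using further_le[OF assms(1,2) mx(1) _ a] by simp
    then show "a \<in> {a \<in> topspace T. furtherness T x a = 0}" using a mx by auto
  qed
  have "furtherness T y x \<le> card ((minimal_open T y \<union> minimal_open T x) - minimal_open T y)"
    using further_le[OF assms(1,3), of "minimal_open T y \<union> minimal_open T x" x] mx my
    by auto
  also have "\<dots> \<le> card (minimal_open T x)"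
    using mx(3) assms(1) by (intro card_mono) (auto intro: rev_finite_subset)
  also have "\<dots> \<le> card {a \<in> topspace T. furtherness T x a = 0}"
    using sub assms(1) by (intro card_mono) auto
  finally show ?thesis .
qed

end
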